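(* Let $\mathcal{S}=(L,A,<)$ be an abstract numeration system built on a prefix-closed regular language $L$. A sequence $\mathbf{x}$ over a finite alphabet is $\mathcal{S}$-automatic if and only if the labeled tree $T(L)$ decorated by $\mathbf{x}$ is rational.
   Context: An abstract numeration system is a triple $\mathcal{S}=(L,A,<)$ with $L$ an infinite language over a totally ordered finite alphabet $A$; $\mathrm{rep}_{\mathcal{S}}(n)$ is the $(n+1)$st word of $L$ in radix order (shorter words first, then lexicographic), and $\mathrm{val}_{\mathcal{S}}$ is its inverse. $\mathbf{x}=x_0x_1\cdots$ is $\mathcal{S}$-automatic if there is a deterministic finite automaton with output $(Q,q_0,A,\delta,\tau)$ with $x_n=\tau(\delta(q_0,\mathrm{rep}_{\mathcal{S}}(n)))$ for all $n$. $T(L)$ is the tree whose nodes are the words of $L$, with an edge labeled $d$ from $w$ to $wd$ whenever $w,wd\in L$; it is decorated by $\mathbf{x}$ by giving node $w$ the decoration $x_{\mathrm{val}_{\mathcal{S}}(w)}$. For $w\in L$, the suffix $T[w]$ has domain $w^{-1}L=\{u: wu\in L\}$ and node $u$ of $T[w]$ has decoration $x_{\mathrm{val}_{\mathcal{S}}(wu)}$; two suffixes are equal if they have the same domain and the same decorations at every node of the domain. The decorated tree is rational if it has finitely many distinct suffixes. *)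

theory Defs
  imports Main
begin

definition prefix_closed :: "'a list set \<Rightarrow> bool" where
  "prefix_closed L \<longleftrightarrow> (\<forall>u v. u @ v \<in> L \<longrightarrow> u \<in> L)"

definition regular :: "('a::finite) list set \<Rightarrow> bool" where
  "regular L \<longleftrightarrow> (\<exists>(Q::nat set) q0 (\<delta>::nat \<Rightarrow> 'a \<Rightarrow> nat) F.
      finite Q \<and> q0 \<in> Q \<and> (\<forall>q\<in>Q. \<forall>a. \<delta> q a \<in> Q) \<and> F \<subseteq> Q \<and>
      L = {w. foldl \<delta> q0 w \<in> F})"

text \<open>Radix order (shorter words first, then lexicographic): this is exactly lenlex.\<close>

definition radix_less :: "('a::linorder) list \<Rightarrow> 'a list \<Rightarrow> bool" where
  "radix_less u v \<longleftrightarrow> (u, v) \<in> lenlex {(a, b). a < b}"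

definition val_ANS :: "('a::linorder) list set \<Rightarrow> 'a list \<Rightarrow> nat" where
  "val_ANS L w = card {v \<in> L. radix_less v w}"

definition rep_ANS :: "('a::linorder) list set \<Rightarrow> nat \<Rightarrow> 'a list" where
  "rep_ANS L n = (THE w. w \<in> L \<and> val_ANS L w = n)"

definition S_automatic :: "('a::{finite,linorder}) list set \<Rightarrow> (nat \<Rightarrow> 'b) \<Rightarrow> bool" where
  "S_automatic L x \<longleftrightarrow> (\<exists>(Q::nat set) q0 (\<delta>::nat \<Rightarrow> 'a \<Rightarrow> nat) (\<tau>::nat \<Rightarrow> 'b).
      finite Q \<and> q0 \<in> Q \<and> (\<forall>q\<in>Q. \<forall>a. \<delta> q a \<in> Q) \<and>
      (\<forall>n. x n = \<tau> (foldl \<delta> q0 (rep_ANS L n))))"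

text \<open>The suffix T[w] of the tree T(L) decorated by x: its domain is w^-1 L, and the
  node u carries the decoration x(val(wu)). Two suffixes are equal iff they have the same domain and
  the same decorations on it.\<close>

definition tree_suffix :: "('a::linorder) list set \<Rightarrow> (nat \<Rightarrow> 'b) \<Rightarrow> 'a list \<Rightarrow> ('a list \<Rightarrow> 'b option)" where
  "tree_suffix L x w = (\<lambda>u. if w @ u \<in> L then Some (x (val_ANS L (w @ u))) else None)"

definition rational_tree :: "('a::linorder) list set \<Rightarrow> (nat \<Rightarrow> 'b) \<Rightarrow> bool" where
  "rational_tree L x \<longleftrightarrow> finite (tree_suffix L x ` L)"

end

theory Submission
  imports Defs
begin

lemma wfR: "wf {(a,b::'a::{finite,linorder}). a<b}"
proof (rule finite_acyclic_wf)
  show "finite {(a,b::'a::{finite,linorder}). a<b}" by simp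
  have "trans {(a,b::'a::{finite,linorder}). a<b}" by (auto simp: trans_def)
  then show "acyclic {(a,b::'a::{finite,linorder}). a<b}"
    by (simp add: acyclic_def trancl_id)
qed

lemma radix_irrefl: "\<not> radix_less (w::'a::linorder list) w"
  unfolding radix_less_def by (rule lenlex_irreflexive) simp

lemma radix_trans: "radix_less (u::'a::linorder list) v \<Longrightarrow> radix_less v w \<Longrightarrow> radix_less u w"
  unfolding radix_less_def by (erule lenlex_trans) (auto simp: trans_def)

lemma radix_total: "(u::'a::linorder list) \<noteq> v \<Longrightarrow> radix_less u v \<or> radix_less v u"
proof -
  assume "u \<noteq> v"
  have "total {(a,b::'a). a<b}" by (auto simp: total_on_def)
  then have "total (lenlex {(a,b::'a). a<b})" by (rule total_lenlex)
  then show ?thesis using \<open>u \<noteq> v\<close> unfolding radix_less_def total_on_def by blast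
qed

lemma radix_finite: "finite {v. radix_less v (w::'a::{finite,linorder} list)}"
proof -
  have "{v. radix_less v w} \<subseteq> {xs. set xs \<subseteq> UNIV \<and> length xs \<le> length w}"
    unfolding radix_less_def by (auto dest: lenlex_length)
  moreover have "finite {xs. set xs \<subseteq> (UNIV::'a set) \<and> length xs \<le> length w}"
    by (rule finite_lists_length_le) simp
  ultimately show ?thesis by (rule finite_subset)
qed

lemma val_less:
  assumes "u \<in> L" "radix_less u (v::'a::{finite,linorder} list)"
  shows "val_ANS L u < val_ANS L v"
  unfolding val_ANS_def
proof (rule psubset_card_mono)
  show "finite {va \<in> L. radix_less va v}" using radix_finite[of v] by (rule finite_subset[rotated]) auto
  show "{v \<in> L. radix_less v u} \<subset> {va \<in> L. radix_less va v}"
    using assms radix_trans radix_irrefl by blast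
qed

lemma val_inj: "u \<in> L \<Longrightarrow> v \<in> L \<Longrightarrow> val_ANS L u = val_ANS L (v::'a::{finite,linorder} list) \<Longrightarrow> u = v"
  using radix_total val_less by (metis less_irrefl)

lemma rep_val: "w \<in> L \<Longrightarrow> rep_ANS L (val_ANS L w) = (w::'a::{finite,linorder} list)"
  unfolding rep_ANS_def by (rule the_equality) (auto dest: val_inj)

lemma val_surj:
  assumes "infinite (L::'a::{finite,linorder} list set)"
  shows "\<exists>w\<in>L. val_ANS L w = n"
proof (induction n)
  case 0
  have "L \<noteq> {}" using assms by auto
  then obtain w where w: "w \<in> L" "\<And>y. (y, w) \<in> lenlex {(a,b::'a). a<b} \<Longrightarrow> y \<notin> L"
    using wfE_min[OF wf_lenlex[OF wfR]] by blast
  then have "{v \<in> L. radix_less v w} = {}" unfolding radix_less_def by blast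
  then show ?case using w(1) unfolding val_ANS_def by (metis card.empty)
next
  case (Suc n)
  then obtain w where w: "w \<in> L" "val_ANS L w = n" by blast
  have "{v \<in> L. radix_less w v} \<noteq> {}"
  proof
    assume "{v \<in> L. radix_less w v} = {}"
    then have "L \<subseteq> insert w {v. radix_less v w}" using radix_total by blast
    moreover have "finite (insert w {v. radix_less v w})" using radix_finite[of w] by simp
    ultimately show False using assms by (meson finite_subset)
  qed
  then obtain v0 where v0: "v0 \<in> {v \<in> L. radix_less w v}" by blast
  obtain v where v': "v \<in> {v \<in> L. radix_less w v}" 
     and v3: "\<And>y. (y, v) \<in> lenlex {(a,b::'a). a<b} \<Longrightarrow> y \<notin> {v \<in> L. radix_less w v}"
    by (rule wfE_min[OF wf_lenlex[OF wfR] v0]) (rule that)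
  have v: "v \<in> L" "radix_less w v" "\<And>y. (y, v) \<in> lenlex {(a,b::'a). a<b} \<Longrightarrow> y \<notin> {v \<in> L. radix_less w v}"
    using v' v3 by auto
  have eq: "{y \<in> L. radix_less y v} = insert w {y \<in> L. radix_less y w}"
  proof
    show "{y \<in> L. radix_less y v} \<subseteq> insert w {y \<in> L. radix_less y w}"
    proof
      fix y assume y: "y \<in> {y \<in> L. radix_less y v}"
      show "y \<in> insert w {y \<in> L. radix_less y w}"
      proof (cases "y = w")
        case False
        have "\<not> radix_less w y" using v(3)[of y] y unfolding radix_less_def by blast
        then have "radix_less y w" using radix_total[OF False] by blast
        then show ?thesis using y by blast
      qed simp
    qed
    show "insert w {y \<in> L. radix_less y w} \<subseteq> {y \<in> L. radix_less y v}"
      using v w radix_trans by blast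
  qed
  have "finite {y \<in> L. radix_less y w}" using radix_finite[of w] by (rule finite_subset[rotated]) auto
  moreover have "w \<notin> {y \<in> L. radix_less y w}" using radix_irrefl by blast
  ultimately have "val_ANS L v = Suc n" unfolding val_ANS_def eq using w(2)
    by (simp add: card_insert_disjoint val_ANS_def)
  then show ?case using v by blast
qed

lemma foldl_closed: "q \<in> Q \<Longrightarrow> \<forall>q\<in>Q. \<forall>a. \<delta> q a \<in> Q \<Longrightarrow> foldl \<delta> q w \<in> Q"
  by (induction w arbitrary: q) auto

lemma suffix_snoc: "tree_suffix L x (w @ [a]) = (\<lambda>u. tree_suffix L x w (a # u))"
  unfolding tree_suffix_def by auto

theorem mainTheorem8:
  fixes L :: "('a::{finite,linorder}) list set"
    and x :: "nat \<Rightarrow> 'b::finite"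
  assumes "infinite L"
    and "prefix_closed L"
    and "regular L"
  shows "S_automatic L x \<longleftrightarrow> rational_tree L x"
proof
  assume "S_automatic L x"
  then obtain Q1 q1 \<delta>1 \<tau>1 where A: "finite (Q1::nat set)" "q1 \<in> Q1" "\<forall>q\<in>Q1. \<forall>a. (\<delta>1::nat \<Rightarrow> 'a \<Rightarrow> nat) q a \<in> Q1"
      "\<And>n. x n = (\<tau>1::nat \<Rightarrow> 'b) (foldl \<delta>1 q1 (rep_ANS L n))"
    unfolding S_automatic_def by blast
  obtain Q2 q2 \<delta>2 F where B: "finite (Q2::nat set)" "q2 \<in> Q2" "\<forall>q\<in>Q2. \<forall>a. (\<delta>2::nat \<Rightarrow> 'a \<Rightarrow> nat) q a \<in> Q2"
      "L = {w. foldl \<delta>2 q2 w \<in> F}"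
    using assms(3) unfolding regular_def by blast
  define G where "G = (\<lambda>(p,q). (\<lambda>u. if foldl \<delta>2 p u \<in> F then Some (\<tau>1 (foldl \<delta>1 q u)) else None))"
  have "tree_suffix L x ` L \<subseteq> G ` (Q2 \<times> Q1)"
  proof
    fix t assume "t \<in> tree_suffix L x ` L"
    then obtain w where w: "w \<in> L" "t = tree_suffix L x w" by blast
    have "t = G (foldl \<delta>2 q2 w, foldl \<delta>1 q1 w)"
    proof
      fix u
      have m: "(w @ u \<in> L) = (foldl \<delta>2 (foldl \<delta>2 q2 w) u \<in> F)" using B(4) by simp
      show "t u = G (foldl \<delta>2 q2 w, foldl \<delta>1 q1 w) u"
      proof (cases "w @ u \<in> L")
        case True
        then have "x (val_ANS L (w @ u)) = \<tau>1 (foldl \<delta>1 q1 (w @ u))"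
          using A(4)[of "val_ANS L (w @ u)"] rep_val[OF True] by simp
        then show ?thesis using True m w(2) unfolding G_def tree_suffix_def by simp
      next
        case False
        then show ?thesis using m w(2) unfolding G_def tree_suffix_def by simp
      qed
    qed
    moreover have "(foldl \<delta>2 q2 w, foldl \<delta>1 q1 w) \<in> Q2 \<times> Q1"
      using foldl_closed[OF B(2) B(3)] foldl_closed[OF A(2) A(3)] by blast
    ultimately show "t \<in> G ` (Q2 \<times> Q1)" by blast
  qed
  moreover have "finite (G ` (Q2 \<times> Q1))" using A(1) B(1) by simp
  ultimately show "rational_tree L x" unfolding rational_tree_def by (rule finite_subset)
next
  assume rt: "rational_tree L x"
  define S where "S = range (tree_suffix L x)"
  have "S \<subseteq> insert (\<lambda>_. None) (tree_suffix L x ` L)"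
  proof
    fix t assume "t \<in> S"
    then obtain w where w: "t = tree_suffix L x w" unfolding S_def by blast
    show "t \<in> insert (\<lambda>_. None) (tree_suffix L x ` L)"
    proof (cases "w \<in> L")
      case False
      then have "\<And>u. w @ u \<notin> L" using assms(2) unfolding prefix_closed_def by blast
      then have "t = (\<lambda>_. None)" unfolding w tree_suffix_def by simp
      then show ?thesis by simp
    qed (use w in simp)
  qed
  then have fS: "finite S" by (rule finite_subset) (simp add: rt[unfolded rational_tree_def])
  then obtain g :: "('a list \<Rightarrow> 'b option) \<Rightarrow> nat" and N where g: "g ` S = {i. i < N}" "inj_on g S"
    using finite_imp_inj_to_nat_seg[OF fS] by blast
  define \<delta> where "\<delta> = (\<lambda>q a. g ((\<lambda>u. inv_into S g q (a # u))))"
  define \<tau> where "\<tau> = (\<lambda>q. the (inv_into S g q []))"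
  have inS: "tree_suffix L x w \<in> S" for w unfolding S_def by simp
  have step: "\<delta> (g (tree_suffix L x w)) a = g (tree_suffix L x (w @ [a]))" for w a
    unfolding \<delta>_def suffix_snoc using inv_into_f_f[OF g(2) inS] by simp
  have run: "foldl \<delta> (g (tree_suffix L x w)) v = g (tree_suffix L x (w @ v))" for v w
    by (induction v arbitrary: w) (simp_all add: step)
  have clos: "\<forall>q\<in>g ` S. \<forall>a. \<delta> q a \<in> g ` S"
  proof (intro ballI allI)
    fix q a assume "q \<in> g ` S"
    then obtain w where "q = g (tree_suffix L x w)" unfolding S_def by blast
    then show "\<delta> q a \<in> g ` S" using step[of w a] inS[of "w @ [a]"] by simp
  qed
  have all: "x n = \<tau> (foldl \<delta> (g (tree_suffix L x [])) (rep_ANS L n))" for n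
  proof -
    obtain w where w: "w \<in> L" "val_ANS L w = n" using val_surj[OF assms(1)] by blast
    then have r: "rep_ANS L n = w" using rep_val by blast
    have "inv_into S g (g (tree_suffix L x ([] @ w))) = tree_suffix L x w"
      using inv_into_f_f[OF g(2) inS] by simp
    then show ?thesis unfolding r run \<tau>_def using w
      by (simp add: tree_suffix_def)
  qed
  have fin: "finite (g ` S)" using fS by simp
  have q0: "g (tree_suffix L x []) \<in> g ` S" using inS by simp
  show "S_automatic L x" unfolding S_automatic_def
    apply (rule exI[of _ "g ` S"], rule exI[of _ "g (tree_suffix L x [])"], rule exI[of _ \<delta>], rule exI[of _ \<tau>])
    using fin q0 clos all by blast
qed

end
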